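(* Let $d\ge2$, $\kappa,l>0$ and $V(\phi)=-\frac{d(d-1)}{2\kappa^2l^2}\cosh\big(\frac23\sqrt{\frac{d\kappa^2}{d-1}}\phi\big)$. Let $\rho=\tanh\big(\frac23\sqrt{\frac{d\kappa^2}{d-1}}\phi\big)$, $\psi=\sqrt{\frac{d\kappa^2}{d-1}}\phi$, and for $\nu\ge-1$ let $$W(\phi;\nu)=-\frac{d-1}{\kappa^2l}\frac{1}{(1-\rho^2)^{3/4}}\frac{1-\rho^2+\sqrt{1+2\nu\rho+\rho^2}}{\sqrt{2\big(1+\nu\rho+\sqrt{1+2\nu\rho+\rho^2}\big)}}.$$ Then: (i) for every $\nu\ge-1$, $W(\phi;\nu)=-\frac{d-1}{\kappa^2l}\big(1+\frac16\psi^2+\frac1{27}\nu\psi^3+O(\psi^4)\big)$ as $\phi\to0$; (ii) for every $\phi>0$, $\lim_{\nu\to\infty}W(\phi;\nu)=W_\infty(\phi):=-\frac{d-1}{\kappa^2l}(1-\rho^2)^{-3/4}$; (iii) $W_\infty$ satisfies $V=\frac12\big(W_\infty'^2-\frac{d\kappa^2}{d-1}W_\infty^2\big)$ and $W_\infty=-\frac{d-1}{\kappa^2l}\big(1+\frac13\psi^2+O(\psi^4)\big)$. In particular (with $m^2l^2=-2d^2/9$, $\Delta_-=d/3$, $\Delta_+=2d/3$), each $W(\cdot;\nu)$ with finite $\nu$ has leading behaviour $-\frac{d-1}{\kappa^2l}-\frac{\Delta_-}{2l}\phi^2$, whereas $W_\infty$ has leading behaviour $-\frac{d-1}{\kappa^2l}-\frac{\Delta_+}{2l}\phi^2$.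 *)

theory Defs
  imports "HOL-Analysis.Analysis" "HOL-Library.Landau_Symbols"
begin

definition cc :: "nat \<Rightarrow> real \<Rightarrow> real" where
  "cc d \<kappa> = sqrt (real d * \<kappa>\<^sup>2 / (real d - 1))"

definition pot :: "nat \<Rightarrow> real \<Rightarrow> real \<Rightarrow> real \<Rightarrow> real" where
  "pot d \<kappa> l \<phi> = - (real d * (real d - 1)) / (2 * \<kappa>\<^sup>2 * l\<^sup>2) * cosh (2/3 * cc d \<kappa> * \<phi>)"

definition rho :: "nat \<Rightarrow> real \<Rightarrow> real \<Rightarrow> real" where
  "rho d \<kappa> \<phi> = tanh (2/3 * cc d \<kappa> * \<phi>)"

definition psi :: "nat \<Rightarrow> real \<Rightarrow> real \<Rightarrow> real" where
  "psi d \<kappa> \<phi> = cc d \<kappa> * \<phi>"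

definition Wsup :: "nat \<Rightarrow> real \<Rightarrow> real \<Rightarrow> real \<Rightarrow> real \<Rightarrow> real" where
  "Wsup d \<kappa> l \<nu> \<phi> =
     (let \<rho> = rho d \<kappa> \<phi>; s = sqrt (1 + 2 * \<nu> * \<rho> + \<rho>\<^sup>2) in
      - (real d - 1) / (\<kappa>\<^sup>2 * l) * (1 / (1 - \<rho>\<^sup>2) powr (3/4))
        * ((1 - \<rho>\<^sup>2 + s) / sqrt (2 * (1 + \<nu> * \<rho> + s))))"

definition Winf :: "nat \<Rightarrow> real \<Rightarrow> real \<Rightarrow> real \<Rightarrow> real" where
  "Winf d \<kappa> l \<phi> = - (real d - 1) / (\<kappa>\<^sup>2 * l) * (1 - (rho d \<kappa> \<phi>)\<^sup>2) powr (-3/4)"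

definition Delta_minus :: "nat \<Rightarrow> real" where "Delta_minus d = real d / 3"
definition Delta_plus :: "nat \<Rightarrow> real" where "Delta_plus d = 2 * real d / 3"

end

theory Submission
  imports Defs "HOL-Real_Asymp.Real_Asymp"
begin

definition Gf :: "real \<Rightarrow> real \<Rightarrow> real" where
  "Gf \<nu> x = (let \<rho> = tanh (2/3*x); s = sqrt (1 + 2 * \<nu> * \<rho> + \<rho>\<^sup>2) in
      (1 / (1 - \<rho>\<^sup>2) powr (3/4))
        * ((1 - \<rho>\<^sup>2 + s) / sqrt (2 * (1 + \<nu> * \<rho> + s))))"

lemma Gf_exp:
  assumes "\<nu> \<ge> -1"
  shows "(\<lambda>x::real. Gf \<nu> x - (1 + x^2/6 + \<nu>*x^3/27)) \<in> O[at 0](\<lambda>x. x^4)"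
  using assms unfolding Gf_def Let_def by (real_asymp simp add: field_simps power2_eq_square)

lemma Hf_exp:
  "(\<lambda>x::real. (1 - (tanh (2/3*x))\<^sup>2) powr (-3/4) - (1 + x^2/3)) \<in> O[at 0](\<lambda>x. x^4)"
  by (real_asymp simp add: field_simps power2_eq_square)

lemma lim_nu:
  assumes "0 < \<rho>" "\<rho> < 1"
  shows "((\<lambda>\<nu>::real. (1 - \<rho>\<^sup>2 + sqrt (1 + 2 * \<nu> * \<rho> + \<rho>\<^sup>2)) / sqrt (2 * (1 + \<nu> * \<rho> + sqrt (1 + 2 * \<nu> * \<rho> + \<rho>\<^sup>2)))) \<longlongrightarrow> 1) at_top"
  using assms by real_asymp

lemma lin_at0:
  assumes "(c::real) > 0"
  shows "filterlim (\<lambda>x. c * x) (at 0) (at 0)"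
  using assms by real_asymp

lemma Winf_alt:
  fixes x :: real
  shows "(1 - (tanh x)\<^sup>2) powr (-3/4) = cosh x powr (3/2)"
proof -
  have cp: "cosh x > 0" by simp
  have h: "cosh x ^ 2 - sinh x ^ 2 = 1" by (simp add: cosh_square_eq)
  have "1 - (tanh x)\<^sup>2 = (cosh x ^ 2 - sinh x ^ 2) / cosh x ^ 2"
    using cp by (simp add: tanh_def power_divide diff_divide_distrib)
  hence "1 - (tanh x)\<^sup>2 = inverse (cosh x ^ 2)" using h by (simp add: divide_inverse)
  also have "cosh x ^ 2 = cosh x powr 2" using cp by (simp add: powr_realpow)
  finally have "(1 - (tanh x)\<^sup>2) powr (-3/4) = (inverse (cosh x powr 2)) powr (-3/4)" by simp
  also have "\<dots> = (cosh x powr 2) powr (3/4)"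
    using cp by (simp add: powr_minus inverse_powr)
  also have "\<dots> = cosh x powr (2 * (3/4))" by (simp only: powr_powr)
  also have "\<dots> = cosh x powr (3/2)" by simp
  finally show ?thesis .
qed

theorem mainTheorem5:
  fixes d :: nat and \<kappa> l :: real
  assumes "d \<ge> 2" and "\<kappa> > 0" and "l > 0"
  shows
    "(\<forall>\<nu>::real. \<nu> \<ge> -1 \<longrightarrow>
       (\<lambda>\<phi>. Wsup d \<kappa> l \<nu> \<phi> - (- (real d - 1) / (\<kappa>\<^sup>2 * l)
          * (1 + (psi d \<kappa> \<phi>)\<^sup>2 / 6 + \<nu> * (psi d \<kappa> \<phi>)^3 / 27)))
       \<in> O[at 0](\<lambda>\<phi>. (psi d \<kappa> \<phi>)^4))
   \<and> (\<forall>\<phi>::real. \<phi> > 0 \<longrightarrow> ((\<lambda>\<nu>. Wsup d \<kappa> l \<nu> \<phi>) \<longlongrightarrow> Winf d \<kappa> l \<phi>) at_top)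
   \<and> (\<forall>\<phi>::real. Winf d \<kappa> l differentiable (at \<phi>) \<and>
        pot d \<kappa> l \<phi> = 1/2 * ((deriv (Winf d \<kappa> l) \<phi>)\<^sup>2
                      - real d * \<kappa>\<^sup>2 / (real d - 1) * (Winf d \<kappa> l \<phi>)\<^sup>2))
   \<and> (\<lambda>\<phi>. Winf d \<kappa> l \<phi> - (- (real d - 1) / (\<kappa>\<^sup>2 * l) * (1 + (psi d \<kappa> \<phi>)\<^sup>2 / 3)))
       \<in> O[at 0](\<lambda>\<phi>. (psi d \<kappa> \<phi>)^4)
   \<and> (\<forall>\<nu>::real. \<nu> \<ge> -1 \<longrightarrow>
       (\<lambda>\<phi>. Wsup d \<kappa> l \<nu> \<phi> - (- (real d - 1) / (\<kappa>\<^sup>2 * l) - Delta_minus d / (2 * l) * \<phi>\<^sup>2))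
       \<in> o[at 0](\<lambda>\<phi>. \<phi>\<^sup>2))
   \<and> (\<lambda>\<phi>. Winf d \<kappa> l \<phi> - (- (real d - 1) / (\<kappa>\<^sup>2 * l) - Delta_plus d / (2 * l) * \<phi>\<^sup>2))
       \<in> o[at 0](\<lambda>\<phi>. \<phi>\<^sup>2)"
proof -
  define c where "c = cc d \<kappa>"
  define K where "K = real d * \<kappa>\<^sup>2 / (real d - 1)"
  define B where "B = - (real d - 1) / (\<kappa>\<^sup>2 * l)"
  have d1: "real d - 1 > 0" using assms(1) by simp
  have Kp: "K > 0" unfolding K_def using d1 assms by simp
  have cK: "c\<^sup>2 = K" unfolding c_def cc_def K_def[symmetric] using Kp by simp
  have cp: "c > 0" unfolding c_def cc_def K_def[symmetric] using Kp by simp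
  have Bn: "B \<noteq> 0" unfolding B_def using d1 assms by simp
  have BK: "B * K = - real d / l" unfolding B_def K_def using d1 assms by (simp add: field_simps)
  have lin: "filterlim (\<lambda>x. c * x) (at 0) (at 0)" using lin_at0[OF cp] .
  have psi_eq: "\<And>\<phi>. psi d \<kappa> \<phi> = c * \<phi>" unfolding psi_def c_def by simp
  have Wsup_eq: "\<And>\<nu> \<phi>. Wsup d \<kappa> l \<nu> \<phi> = B * Gf \<nu> (c * \<phi>)"
    unfolding Wsup_def Gf_def rho_def Let_def B_def c_def by (simp add: mult.assoc)
  have Winf_eq: "\<And>\<phi>. Winf d \<kappa> l \<phi> = B * (1 - (tanh (2/3 * (c * \<phi>)))\<^sup>2) powr (-3/4)"
    unfolding Winf_def rho_def B_def c_def by (simp add: mult.assoc)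
  have P1: "(\<lambda>\<phi>. Wsup d \<kappa> l \<nu> \<phi> - (- (real d - 1) / (\<kappa>\<^sup>2 * l)
          * (1 + (psi d \<kappa> \<phi>)\<^sup>2 / 6 + \<nu> * (psi d \<kappa> \<phi>)^3 / 27)))
       \<in> O[at 0](\<lambda>\<phi>. (psi d \<kappa> \<phi>)^4)" if nu: "\<nu> \<ge> -1" for \<nu>
  proof -
    have "(\<lambda>\<phi>. Gf \<nu> (c*\<phi>) - (1 + (c*\<phi>)^2/6 + \<nu>*(c*\<phi>)^3/27)) \<in> O[at 0](\<lambda>\<phi>. (c*\<phi>)^4)"
      using landau_o.big.compose[OF Gf_exp[OF nu] lin] by simp
    hence "(\<lambda>\<phi>. B * (Gf \<nu> (c*\<phi>) - (1 + (c*\<phi>)^2/6 + \<nu>*(c*\<phi>)^3/27))) \<in> O[at 0](\<lambda>\<phi>. (c*\<phi>)^4)"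
      using Bn by simp
    thus ?thesis unfolding psi_eq Wsup_eq B_def[symmetric] by (simp add: algebra_simps)
  qed
  have P2: "((\<lambda>\<nu>. Wsup d \<kappa> l \<nu> \<phi>) \<longlongrightarrow> Winf d \<kappa> l \<phi>) at_top" if ph: "\<phi> > 0" for \<phi>
  proof -
    define \<rho> where "\<rho> = tanh (2/3 * (c * \<phi>))"
    have r0: "\<rho> > 0" unfolding \<rho>_def using cp ph by simp
    have r1: "\<rho> < 1" unfolding \<rho>_def by (rule tanh_real_lt_1)
    have "((\<lambda>\<nu>. B * (1 / (1 - \<rho>\<^sup>2) powr (3/4)) * ((1 - \<rho>\<^sup>2 + sqrt (1 + 2 * \<nu> * \<rho> + \<rho>\<^sup>2)) / sqrt (2 * (1 + \<nu> * \<rho> + sqrt (1 + 2 * \<nu> * \<rho> + \<rho>\<^sup>2)))))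
       \<longlongrightarrow> B * (1 / (1 - \<rho>\<^sup>2) powr (3/4)) * 1) at_top"
      by (intro tendsto_mult_left lim_nu r0 r1)
    moreover have "B * (1 / (1 - \<rho>\<^sup>2) powr (3/4)) * 1 = Winf d \<kappa> l \<phi>"
      unfolding Winf_eq \<rho>_def using powr_minus_divide[of "1 - \<rho>\<^sup>2" "3/4"] by (simp add: \<rho>_def)
    ultimately show ?thesis
      unfolding Wsup_eq Gf_def Let_def \<rho>_def by (simp add: mult.assoc)
  qed
  define b where "b = 2/3 * c"
  have Winf_fun: "Winf d \<kappa> l = (\<lambda>\<phi>. B * cosh (b * \<phi>) powr (3/2))"
    unfolding Winf_eq Winf_alt b_def by (simp add: fun_eq_iff mult.assoc)
  have P3: "Winf d \<kappa> l differentiable (at \<phi>) \<and>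
        pot d \<kappa> l \<phi> = 1/2 * ((deriv (Winf d \<kappa> l) \<phi>)\<^sup>2
                      - real d * \<kappa>\<^sup>2 / (real d - 1) * (Winf d \<kappa> l \<phi>)\<^sup>2)" for \<phi>
  proof -
    have D: "((\<lambda>\<phi>. B * cosh (b * \<phi>) powr (3/2)) has_real_derivative
       B * (3/2 * cosh (b * \<phi>) powr (1/2) * (sinh (b * \<phi>) * b))) (at \<phi>)"
      by (auto intro!: derivative_eq_intros)
    have dv: "deriv (Winf d \<kappa> l) \<phi> = B * (3/2 * cosh (b * \<phi>) powr (1/2) * (sinh (b * \<phi>) * b))"
      unfolding Winf_fun using D by (rule DERIV_imp_deriv)
    have W1: "Winf d \<kappa> l \<phi> = B * cosh (b * \<phi>) powr (3/2)" by (simp add: Winf_fun)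
    have s1: "(cosh (b * \<phi>) powr (1/2))\<^sup>2 = cosh (b * \<phi>)"
      by (simp add: powr_power)
    have s3: "(cosh (b * \<phi>) powr (3/2))\<^sup>2 = cosh (b * \<phi>) ^ 3"
      by (simp add: powr_power)
    have bb: "(3/2 * b)\<^sup>2 = K" unfolding b_def using cK by (simp add: power2_eq_square)
    have "1/2 * ((deriv (Winf d \<kappa> l) \<phi>)\<^sup>2 - K * (Winf d \<kappa> l \<phi>)\<^sup>2)
        = 1/2 * (B\<^sup>2 * (3/2*b)\<^sup>2 * (cosh (b * \<phi>) powr (1/2))\<^sup>2 * (sinh (b * \<phi>))\<^sup>2
             - K * B\<^sup>2 * (cosh (b * \<phi>) powr (3/2))\<^sup>2)"
      unfolding dv W1 by (simp add: power2_eq_square algebra_simps)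
    also have "\<dots> = 1/2 * (B\<^sup>2 * K * cosh (b * \<phi>) * ((sinh (b * \<phi>))\<^sup>2 - (cosh (b * \<phi>))\<^sup>2))"
      unfolding s1 s3 bb by (simp add: algebra_simps power2_eq_square power3_eq_cube)
    also have "\<dots> = - 1/2 * (B * (B * K)) * cosh (b * \<phi>)"
      unfolding cosh_square_eq[of "b * \<phi>"] by (simp add: algebra_simps power2_eq_square)
    also have "\<dots> = pot d \<kappa> l \<phi>"
      unfolding BK pot_def b_def c_def using assms d1
      by (simp add: B_def field_simps power2_eq_square)
    finally have "pot d \<kappa> l \<phi> = 1/2 * ((deriv (Winf d \<kappa> l) \<phi>)\<^sup>2 - K * (Winf d \<kappa> l \<phi>)\<^sup>2)" by simp
    moreover have "Winf d \<kappa> l differentiable (at \<phi>)"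
      unfolding Winf_fun using D real_differentiable_def by blast
    ultimately show ?thesis unfolding K_def by simp
  qed
  have P4: "(\<lambda>\<phi>. Winf d \<kappa> l \<phi> - (- (real d - 1) / (\<kappa>\<^sup>2 * l) * (1 + (psi d \<kappa> \<phi>)\<^sup>2 / 3)))
       \<in> O[at 0](\<lambda>\<phi>. (psi d \<kappa> \<phi>)^4)"
  proof -
    have "(\<lambda>\<phi>. (1 - (tanh (2/3*(c*\<phi>)))\<^sup>2) powr (-3/4) - (1 + (c*\<phi>)^2/3)) \<in> O[at 0](\<lambda>\<phi>. (c*\<phi>)^4)"
      using landau_o.big.compose[OF Hf_exp lin] by simp
    hence "(\<lambda>\<phi>. B * ((1 - (tanh (2/3*(c*\<phi>)))\<^sup>2) powr (-3/4) - (1 + (c*\<phi>)^2/3))) \<in> O[at 0](\<lambda>\<phi>. (c*\<phi>)^4)"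
      using Bn by simp
    thus ?thesis unfolding psi_eq Winf_eq B_def[symmetric] by (simp add: algebra_simps)
  qed
  have q4: "(\<lambda>\<phi>::real. (c*\<phi>)^4) \<in> o[at 0](\<lambda>\<phi>. \<phi>\<^sup>2)" using cp by real_asymp
  have q3: "(\<lambda>\<phi>::real. B * \<nu> * (c*\<phi>)^3 / 27) \<in> o[at 0](\<lambda>\<phi>. \<phi>\<^sup>2)" for \<nu>
  proof -
    have "(\<lambda>\<phi>::real. \<phi>^3) \<in> o[at 0](\<lambda>\<phi>. \<phi>\<^sup>2)" by real_asymp
    hence "(\<lambda>\<phi>::real. (B * \<nu> * c^3 / 27) * \<phi>^3) \<in> o[at 0](\<lambda>\<phi>. \<phi>\<^sup>2)"
      by (cases "B * \<nu> * c^3 / 27 = 0") simp_all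
    thus ?thesis by (simp add: power_mult_distrib mult_ac)
  qed
  have P5: "(\<lambda>\<phi>. Wsup d \<kappa> l \<nu> \<phi> - (- (real d - 1) / (\<kappa>\<^sup>2 * l) - Delta_minus d / (2 * l) * \<phi>\<^sup>2))
       \<in> o[at 0](\<lambda>\<phi>. \<phi>\<^sup>2)" if nu: "\<nu> \<ge> -1" for \<nu>
  proof -
    have a: "(\<lambda>\<phi>. Wsup d \<kappa> l \<nu> \<phi> - B * (1 + (c*\<phi>)\<^sup>2 / 6 + \<nu> * (c*\<phi>)^3 / 27)) \<in> o[at 0](\<lambda>\<phi>. \<phi>\<^sup>2)"
      using landau_o.big_small_trans[OF P1[OF nu, unfolded psi_eq] q4] unfolding psi_eq B_def by simp
    have "(\<lambda>\<phi>. (Wsup d \<kappa> l \<nu> \<phi> - B * (1 + (c*\<phi>)\<^sup>2 / 6 + \<nu> * (c*\<phi>)^3 / 27)) + B * \<nu> * (c*\<phi>)^3 / 27)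
       \<in> o[at 0](\<lambda>\<phi>. \<phi>\<^sup>2)"
      by (rule sum_in_smallo[OF a q3])
    moreover have "Delta_minus d / (2 * l) = - (B * K) / 6"
      unfolding BK Delta_minus_def using assms by (simp add: field_simps)
    ultimately show ?thesis unfolding B_def[symmetric]
      by (simp add: cK[symmetric] power_mult_distrib algebra_simps)
  qed
  have P6: "(\<lambda>\<phi>. Winf d \<kappa> l \<phi> - (- (real d - 1) / (\<kappa>\<^sup>2 * l) - Delta_plus d / (2 * l) * \<phi>\<^sup>2))
       \<in> o[at 0](\<lambda>\<phi>. \<phi>\<^sup>2)"
  proof -
    have a: "(\<lambda>\<phi>. Winf d \<kappa> l \<phi> - B * (1 + (c*\<phi>)\<^sup>2 / 3)) \<in> o[at 0](\<lambda>\<phi>. \<phi>\<^sup>2)"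
      using landau_o.big_small_trans[OF P4[unfolded psi_eq] q4] unfolding psi_eq B_def by simp
    moreover have "Delta_plus d / (2 * l) = - (B * K) / 3"
      unfolding BK Delta_plus_def using assms by (simp add: field_simps)
    ultimately show ?thesis unfolding B_def[symmetric]
      by (simp add: cK[symmetric] power_mult_distrib algebra_simps)
  qed
  show ?thesis using P1 P2 P3 P4 P5 P6 by blast
qed

end
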